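(* Let $A\in\mathbb{R}^{m\times n}$, $b\in\mathbb{R}^m$, $f(x)=\frac12\|Ax-b\|^2$, let $L>0$ be a Lipschitz constant of $\nabla f$, $\lambda>0$, and $H(x)=f(x)+\lambda\|x\|_0$. Let $\{x_k\},\{y_k\}$ be generated by the VMEPIHT method with the choice of $H_k$ and $\alpha_k$ described in the context. Let $x^*$ be any cluster point of $\{x_k\}$ (so $x^*$ is a local minimizer of $H$), let $k_0$ be an index such that $I(y_k)=I(x_k)=I(x^* )$ for all $k\geq k_0$, and assume $\alpha_k>0$ for all $k\geq k_0$. Let $S=\{1,\dots,n\}\setminus I(x^* )$, let $Q$ be the principal submatrix of $A^TA$ indexed by $S$, and for $k\geq k_0$ let $H_k^*$ be the principal submatrix of $H_k$ indexed by $S$ and $d_k^*=-H_k^*(\nabla f(x_k))_S$. Then: (1) $\|x_k-x^*\|^2_{A^TA}$ and $\|y_k-x^*\|^2_{A^TA}$ ($k\ge k_0$) are non-increasing and tend to $0$; moreover, if $\|y_k-x^*\|^2_{A^TA}=0$ for some $k\geq k_0$, then $y_k$ is a local minimizer of $H$; (2) if there are constants $0<m\le M$ with $mI\preceq H_k\preceq MI$ for all $k$, then $\|x_k-x^*\|^2_{A^TA}$ converges to $0$ linearly, i.e. there is $c\in[0,1)$ with $\|x_{k+1}-x^*\|^2_{A^TA}\le c\,\|x_k-x^*\|^2_{A^TA}$ for all $k\ge k_0$; (3) if moreover $Q$ is positive definite and $\lim_{k\to\infty}\frac{\|((H_k^* )^{-1}-Q)d_k^*\|}{\|d_k^*\|}=0$,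 then $\|x_k-x^*\|$ converges to $0$ superlinearly, i.e. $\lim_{k\to\infty}\frac{\|x_{k+1}-x^*\|}{\|x_k-x^*\|}=0$.
   Context: $\|x\|_0$ is the number of nonzero components of $x$; for a symmetric positive semidefinite $B$, $\|v\|_B^2=v^TBv$. For $x\in\mathbb{R}^n$, $I(x):=\{i:x_i=0\}$; for an index set $I$, $C_I:=\{x: x_i=0\ \forall i\in I\}$; $P_C$ is the Euclidean projection onto $C$. For a vector $v$ and index set $S$, $v_S$ is the subvector of entries indexed by $S$. VMEPIHT method: fix $\mu>0$ and a starting point $y_0$. For $k=0,1,2,\dots$: choose $x_k\in\arg\min_x \lambda\|x\|_0+\frac L2\|x-y_k+\frac1L\nabla f(y_k)\|^2+\frac\mu2\|x-y_k\|^2$; then set $y_{k+1}=P_{C_{I(x_k)}}(x_k-\alpha_kH_k\nabla f(x_k))$ with $H_k,\alpha_k$ chosen as follows. Let $S_k=\{1,\dots,n\}\setminus I(x_k)$. $H_k$ is symmetric positive definite and block diagonal with respect to the splitting $S_k$, $I(x_k)$ (i.e. $(H_k)_{ij}=0$ whenever exactly one of $i,j$ lies in $S_k$); let $H_k^k$ be its principal submatrix indexed by $S_k$, $Q^k$ the principal submatrix of $A^TA$ indexed by $S_k$, $g_k=(\nabla f(x_k))_{S_k}$ and $d_k^k=-H_k^kg_k$. If $Q^kd_k^k=0$ set $\alpha_k=0$; otherwise $\alpha_k=\frac{-g_k^Td_k^k}{(d_k^k)^TQ^kd_k^k}$ (exact line search). Thus $y_{k+1}$ equals $x_k+\alpha_kd_k^k$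 on $S_k$ and $0$ elsewhere. *)

theory Defs
  imports "HOL-Analysis.Analysis"
begin

definition lsq_f :: "real^'n^'m \<Rightarrow> real^'m \<Rightarrow> real^'n \<Rightarrow> real" where
  "lsq_f A b x = (1/2) * (norm (A *v x - b))^2"

definition lsq_grad :: "real^'n^'m \<Rightarrow> real^'m \<Rightarrow> real^'n \<Rightarrow> real^'n" where
  "lsq_grad A b x = transpose A *v (A *v x - b)"

definition l0norm :: "real^'n \<Rightarrow> real" where
  "l0norm x = real (card {i. x $ i \<noteq> 0})"

definition Hobj :: "real^'n^'m \<Rightarrow> real^'m \<Rightarrow> real \<Rightarrow> real^'n \<Rightarrow> real" where
  "Hobj A b lam x = lsq_f A b x + lam * l0norm x"

definition zero_idx :: "real^'n \<Rightarrow> 'n set" where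
  "zero_idx x = {i. x $ i = 0}"

definition coord_sub :: "'n set \<Rightarrow> (real^'n) set" where
  "coord_sub I = {x. \<forall>i\<in>I. x $ i = 0}"

definition bnorm2 :: "real^'n^'n \<Rightarrow> real^'n \<Rightarrow> real" where
  "bnorm2 B v = v \<bullet> (B *v v)"

definition sym_posdef :: "real^'n^'n \<Rightarrow> bool" where
  "sym_posdef M \<longleftrightarrow> transpose M = M \<and> (\<forall>v. v \<noteq> 0 \<longrightarrow> v \<bullet> (M *v v) > 0)"

definition block_diag :: "real^'n^'n \<Rightarrow> 'n set \<Rightarrow> bool" where
  "block_diag M S \<longleftrightarrow> (\<forall>i j. (i \<in> S \<longleftrightarrow> j \<notin> S) \<longrightarrow> M $ i $ j = 0)"

text \<open>Operations on principal submatrices indexed by S: vectors indexed by S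
  are represented as functions 'n => real (only values on S matter).\<close>
definition sub_mv :: "real^'n^'n \<Rightarrow> 'n set \<Rightarrow> ('n \<Rightarrow> real) \<Rightarrow> ('n \<Rightarrow> real)" where
  "sub_mv M S v = (\<lambda>i. \<Sum>j\<in>S. M $ i $ j * v j)"

definition sub_dot :: "'n set \<Rightarrow> ('n \<Rightarrow> real) \<Rightarrow> ('n \<Rightarrow> real) \<Rightarrow> real" where
  "sub_dot S u v = (\<Sum>i\<in>S. u i * v i)"

definition sub_norm :: "'n set \<Rightarrow> ('n \<Rightarrow> real) \<Rightarrow> real" where
  "sub_norm S v = sqrt (\<Sum>i\<in>S. (v i)^2)"

definition sub_inv :: "real^'n^'n \<Rightarrow> 'n set \<Rightarrow> ('n \<Rightarrow> 'n \<Rightarrow> real)" where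
  "sub_inv M S = (THE N. (\<forall>i j. (i \<notin> S \<or> j \<notin> S) \<longrightarrow> N i j = 0) \<and>
     (\<forall>i\<in>S. \<forall>j\<in>S. (\<Sum>l\<in>S. M $ i $ l * N l j) = (if i = j then 1 else 0)))"

definition sub_fmv :: "('n \<Rightarrow> 'n \<Rightarrow> real) \<Rightarrow> 'n set \<Rightarrow> ('n \<Rightarrow> real) \<Rightarrow> ('n \<Rightarrow> real)" where
  "sub_fmv N S v = (\<lambda>i. \<Sum>j\<in>S. N i j * v j)"

definition local_minimizer :: "(real^'n \<Rightarrow> real) \<Rightarrow> real^'n \<Rightarrow> bool" where
  "local_minimizer F z \<longleftrightarrow> (\<exists>e>0. \<forall>w. dist w z < e \<longrightarrow> F z \<le> F w)"

end

theory Submission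
  imports Defs "HOL-Analysis.Analysis"
begin



definition msk :: "'n set \<Rightarrow> real^'n \<Rightarrow> real^'n" where
  "msk S v = (\<chi> i. if i \<in> S then v$i else 0)"

lemma msk_nth[simp]: "msk S v $ i = (if i \<in> S then v$i else 0)"
  by (simp add: msk_def)

lemma inner_msk_sum: "msk S u \<bullet> v = (\<Sum>i\<in>S. u$i * v$i)"
proof -
  have "msk S u \<bullet> v = (\<Sum>i\<in>UNIV. if i \<in> S then (u$i) * (v$i) else 0)"
    unfolding inner_vec_def by (rule sum.cong) auto
  also have "\<dots> = (\<Sum>i\<in>S. (u$i) * (v$i))" by (simp add: sum.If_cases)
  finally show ?thesis .
qed

lemma inner_msk_sym: "msk S u \<bullet> v = u \<bullet> msk S v"
  unfolding inner_vec_def by (auto intro!: sum.cong)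

lemma msk_idem[simp]: "msk S (msk S v) = msk S v"
  by (simp add: vec_eq_iff)

lemma msk_add: "msk S (u + v) = msk S u + msk S v"
  by (simp add: vec_eq_iff)
lemma msk_diff: "msk S (u - v) = msk S u - msk S v"
  by (simp add: vec_eq_iff)
lemma msk_scale: "msk S (c *\<^sub>R v) = c *\<^sub>R msk S v"
  by (simp add: vec_eq_iff)
lemma msk_minus: "msk S (- v) = - msk S v"
  by (simp add: vec_eq_iff)

lemma norm_msk_le: "norm (msk S v) \<le> norm v"
proof -
  have "(norm (msk S v))^2 \<le> (norm v)^2"
    unfolding power2_norm_eq_inner inner_vec_def
    by (intro sum_mono) auto
  thus ?thesis by (simp add: power_mono_iff)
qed

lemma coord_sub_msk: "v \<in> coord_sub I \<longleftrightarrow> msk (- I) v = v"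
  by (auto simp: coord_sub_def vec_eq_iff)

lemma inner_G: fixes A :: "real^'n^'m" shows "v \<bullet> ((transpose A ** A) *v w) = (A *v v) \<bullet> (A *v w)"
proof -
  have "v \<bullet> ((transpose A ** A) *v w) = v \<bullet> (transpose A *v (A *v w))"
    by (simp add: matrix_vector_mul_assoc)
  also have "\<dots> = (A *v v) \<bullet> (A *v w)" using dot_lmul_matrix[of v "transpose A" "A *v w"] by simp
  finally show ?thesis .
qed

lemma bnorm2_eq: fixes A :: "real^'n^'m" shows "bnorm2 (transpose A ** A) v = (norm (A *v v))^2"
  by (simp add: bnorm2_def inner_G power2_norm_eq_inner)

lemma grad_diff: fixes A :: "real^'n^'m" shows "lsq_grad A b v - lsq_grad A b u = (transpose A ** A) *v (v - u)"
  by (simp add: lsq_grad_def matrix_vector_mul_assoc[symmetric] algebra_simps)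

lemma grad_inner: fixes A :: "real^'n^'m" shows "lsq_grad A b v \<bullet> w = (A *v w) \<bullet> (A *v v - b)"
proof -
  have "lsq_grad A b v \<bullet> w = w \<bullet> (transpose A *v (A *v v - b))"
    by (simp add: lsq_grad_def inner_commute)
  also have "\<dots> = (A *v w) \<bullet> (A *v v - b)" using dot_lmul_matrix[of w "transpose A" "A *v v - b"] by simp
  finally show ?thesis .
qed

lemma f_expand: fixes A :: "real^'n^'m" shows "lsq_f A b (v + w) = lsq_f A b v + lsq_grad A b v \<bullet> w + (1/2) * (norm (A *v w))^2"
proof -
  have "A *v (v + w) - b = (A *v v - b) + A *v w" by (simp add: algebra_simps)
  hence "(norm (A *v (v + w) - b))^2 = (norm (A *v v - b))^2 + 2 * ((A *v w) \<bullet> (A *v v - b)) + (norm (A *v w))^2"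
    by (simp add: power2_norm_eq_inner algebra_simps inner_commute)
  thus ?thesis by (simp add: lsq_f_def grad_inner algebra_simps)
qed

lemma G_bound:
  fixes A :: "real^'n^'m"
  assumes "\<forall>u v. norm (lsq_grad A b u - lsq_grad A b v) \<le> L * norm (u - v)"
  shows "norm ((transpose A ** A) *v w) \<le> L * norm w"
  using assms[rule_format, of w 0] by (simp add: grad_diff)

lemma A_bound:
  fixes A :: "real^'n^'m"
  assumes "\<forall>u v. norm (lsq_grad A b u - lsq_grad A b v) \<le> L * norm (u - v)"
  shows "(norm (A *v w))^2 \<le> L * (norm w)^2"
proof -
  have "(norm (A *v w))^2 = w \<bullet> ((transpose A ** A) *v w)" by (simp add: inner_G power2_norm_eq_inner)
  also have "\<dots> \<le> norm w * norm ((transpose A ** A) *v w)" by (rule norm_cauchy_schwarz)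
  also have "\<dots> \<le> norm w * (L * norm w)" by (intro mult_left_mono G_bound[OF assms]) auto
  finally show ?thesis by (simp add: power2_eq_square algebra_simps)
qed

lemma block_msk:
  assumes "block_diag H S"
  shows "msk S (H *v v) = H *v (msk S v)"
  unfolding vec_eq_iff
proof
  fix i
  show "msk S (H *v v) $ i = (H *v msk S v) $ i"
  proof (cases "i \<in> S")
    case True
    then show ?thesis using assms unfolding block_diag_def
      by (auto simp: matrix_vector_mult_def intro!: sum.cong)
  next
    case False
    have "(\<Sum>j\<in>UNIV. H $ i $ j * (msk S v) $ j) = 0"
      using assms False unfolding block_diag_def by (intro sum.neutral) auto
    then show ?thesis using False by (simp add: matrix_vector_mult_def)
  qed
qed




lemma coord_sub_subspace: "subspace (coord_sub I)"
  unfolding subspace_def coord_sub_def by auto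

lemma closest_coord: "closest_point (coord_sub I) w = msk (- I) w"
proof -
  have cl: "closed (coord_sub I)" by (rule closed_subspace[OF coord_sub_subspace])
  have cv: "convex (coord_sub I)" by (rule subspace_imp_convex[OF coord_sub_subspace])
  have mem: "msk (- I) w \<in> coord_sub I" by (simp add: coord_sub_def)
  have "\<forall>z\<in>coord_sub I. dist w (msk (- I) w) \<le> dist w z"
  proof
    fix z assume z: "z \<in> coord_sub I"
    have "(dist w (msk (- I) w))^2 \<le> (dist w z)^2"
      unfolding dist_norm power2_norm_eq_inner inner_vec_def
      using z by (intro sum_mono) (auto simp: coord_sub_def)
    thus "dist w (msk (- I) w) \<le> dist w z" by (simp add: power_mono_iff)
  qed
  thus ?thesis using closest_point_unique[OF cv cl mem] by simp
qed

lemma norm2_sum: "(norm (v::real^'n))^2 = (\<Sum>i\<in>UNIV. (v$i)^2)"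
  unfolding power2_norm_eq_inner inner_vec_def by (simp add: power2_eq_square)

lemma prox_char:
  fixes x y g :: "real^'n"
  assumes L: "L > 0" and mu: "mu > 0" and lam: "lam \<ge> 0"
    and opt: "\<forall>z. lam * l0norm x + L/2 * (norm (x - y + (1/L) *\<^sub>R g))^2 + mu/2 * (norm (x - y))^2
             \<le> lam * l0norm z + L/2 * (norm (z - y + (1/L) *\<^sub>R g))^2 + mu/2 * (norm (z - y))^2"
  shows "x = msk (- zero_idx x) (y - (1/(L+mu)) *\<^sub>R g)"
proof -
  define S where "S = - zero_idx x"
  define zs where "zs = msk S (y - (1/(L+mu)) *\<^sub>R g)"
  define q where "q = (\<lambda>z::real^'n. L/2 * (norm (z - y + (1/L) *\<^sub>R g))^2 + mu/2 * (norm (z - y))^2)"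
  have xS: "msk S x = x" by (auto simp: S_def zero_idx_def vec_eq_iff)
  have qid: "q z = q zs + (L+mu)/2 * (norm (z - zs))^2" if zS: "msk S z = z" for z
  proof -
    have zi: "z$i = 0" if "i \<notin> S" for i using zS that by (metis msk_nth)
    have "q z = (\<Sum>i\<in>UNIV. L/2 * (z$i - y$i + g$i/L)^2 + mu/2 * (z$i - y$i)^2)"
      unfolding q_def norm2_sum by (simp add: sum.distrib sum_distrib_left)
    also have "\<dots> = (\<Sum>i\<in>UNIV. (L/2 * (zs$i - y$i + g$i/L)^2 + mu/2 * (zs$i - y$i)^2)
                       + (L+mu)/2 * (z$i - zs$i)^2)"
    proof (rule sum.cong)
      fix i assume "i \<in> (UNIV::'n set)"
      show "L/2 * (z$i - y$i + g$i/L)^2 + mu/2 * (z$i - y$i)^2 = (L/2 * (zs$i - y$i + g$i/L)^2 + mu/2 * (zs$i - y$i)^2)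
                       + (L+mu)/2 * (z$i - zs$i)^2"
      proof (cases "i \<in> S")
        case True
        hence "zs$i = y$i - g$i/(L+mu)" by (simp add: zs_def)
        hence gi: "g$i = (L+mu) * (y$i - zs$i)" using L mu by (simp add: field_simps)
        show ?thesis using L mu by (simp add: gi field_simps power2_eq_square)
      next
        case False
        then show ?thesis using zi[OF False] by (simp add: zs_def)
      qed
    qed simp
    also have "\<dots> = q zs + (L+mu)/2 * (norm (z - zs))^2"
      unfolding q_def norm2_sum by (simp add: sum.distrib sum_distrib_left)
    finally show ?thesis .
  qed
  have l0: "l0norm zs \<le> l0norm x"
  proof -
    have "{i. zs $ i \<noteq> 0} \<subseteq> {i. x $ i \<noteq> 0}" by (auto simp: zs_def S_def zero_idx_def)
    hence "card {i. zs $ i \<noteq> 0} \<le> card {i. x $ i \<noteq> 0}" by (intro card_mono) auto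
    thus ?thesis by (simp add: l0norm_def)
  qed
  have "lam * l0norm x + q x \<le> lam * l0norm zs + q zs" using opt[rule_format, of zs] by (simp add: q_def)
  hence "q x \<le> q zs" using l0 lam by (smt (verit) mult_left_mono)
  hence "(L+mu)/2 * (norm (x - zs))^2 \<le> 0" using qid[OF xS] by simp
  moreover have "(L+mu)/2 > 0" using L mu by simp
  ultimately have "(norm (x - zs))^2 \<le> 0" by (simp add: mult_le_0_iff)
  hence "x = zs" by simp
  thus ?thesis by (simp add: zs_def S_def)
qed

lemma sym_inner:
  fixes H :: "real^'n^'n"
  assumes "transpose H = H"
  shows "u \<bullet> (H *v v) = v \<bullet> (H *v u)"
proof -
  have "u \<bullet> (H *v v) = (u v* H) \<bullet> v" by (simp add: dot_lmul_matrix)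
  also have "u v* H = H *v u" using vector_transpose_matrix[of u H] assms by simp
  finally show ?thesis by (simp add: inner_commute)
qed

lemma spd_cs:
  fixes H :: "real^'n^'n"
  assumes "sym_posdef H"
  shows "(u \<bullet> (H *v v))^2 \<le> (u \<bullet> (H *v u)) * (v \<bullet> (H *v v))"
proof (cases "v = 0")
  case True then show ?thesis by simp
next
  case False
  have sym: "transpose H = H" and pd: "\<And>w. w \<noteq> 0 \<Longrightarrow> w \<bullet> (H *v w) > 0"
    using assms by (auto simp: sym_posdef_def)
  have psd: "w \<bullet> (H *v w) \<ge> 0" for w by (cases "w = 0") (auto dest: pd[of w])
  have vp: "v \<bullet> (H *v v) > 0" using pd False by simp
  define t where "t = - (u \<bullet> (H *v v)) / (v \<bullet> (H *v v))"
  have "0 \<le> (u + t *\<^sub>R v) \<bullet> (H *v (u + t *\<^sub>R v))" by (rule psd)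
  also have "\<dots> = u \<bullet> (H *v u) + 2 * t * (u \<bullet> (H *v v)) + t^2 * (v \<bullet> (H *v v))"
    using sym_inner[OF sym, of v u]
    by (simp add: matrix_vector_right_distrib matrix_vector_mult_scaleR inner_add_left inner_add_right power2_eq_square algebra_simps)
  also have "\<dots> = u \<bullet> (H *v u) - (u \<bullet> (H *v v))^2 / (v \<bullet> (H *v v))"
    using vp by (simp add: t_def field_simps power2_eq_square)
  finally show ?thesis using vp by (simp add: field_simps)
qed

lemma spd_norm_bound:
  fixes H :: "real^'n^'n"
  assumes "sym_posdef H" and M: "\<forall>w. w \<bullet> (H *v w) \<le> M * (norm w)^2"
  shows "(norm (H *v v))^2 \<le> M^2 * (norm v)^2"
proof -
  let ?h = "H *v v"
  have psd: "w \<bullet> (H *v w) \<ge> 0" for w using assms(1) unfolding sym_posdef_def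
        by (cases "w = 0") (auto simp: less_imp_le)
  have "((norm ?h)^2)^2 = (?h \<bullet> (H *v v))^2" by (simp add: power2_norm_eq_inner)
  also have "\<dots> \<le> (?h \<bullet> (H *v ?h)) * (v \<bullet> (H *v v))" by (rule spd_cs[OF assms(1)])
  also have "\<dots> \<le> (M * (norm ?h)^2) * (M * (norm v)^2)"
  proof (rule mult_mono)
    show "0 \<le> M * (norm ?h)^2"
    proof -
      have "?h \<bullet> (H *v ?h) \<ge> 0" using assms(1) unfolding sym_posdef_def
        by (cases "?h = 0") (auto simp: less_imp_le)
      thus ?thesis using M[rule_format, of ?h] by linarith
    qed
  qed (use M psd in auto)
  finally have "((norm ?h)^2)^2 \<le> (M^2 * (norm v)^2) * (norm ?h)^2" by (simp add: algebra_simps power2_eq_square)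
  thus ?thesis
    by (cases "norm ?h = 0") (auto simp: power2_eq_square)
qed




lemma sub_inv_apply:
  fixes H :: "real^'n^'n"
  assumes spd: "sym_posdef H" and bd: "block_diag H S" and iS: "i \<in> S"
  shows "sub_fmv (sub_inv H S) S (sub_mv H S g) i = g i"
proof -
  have pd: "\<And>w. w \<noteq> 0 \<Longrightarrow> w \<bullet> (H *v w) > 0" using spd by (auto simp: sym_posdef_def)
  have inj: "\<forall>w. H *v w = 0 \<longrightarrow> w = 0"
    using pd by (metis inner_zero_right less_irrefl)
  obtain B where BH: "B ** H = mat 1" using inj matrix_left_invertible_ker by blast
  hence HB: "H ** B = mat 1" using matrix_left_right_inverse by blast
  have Hz: "H $ a $ c = 0" if "a \<in> S" "c \<notin> S" for a c using bd that by (auto simp: block_diag_def)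
  have Hz2: "H $ a $ c = 0" if "a \<notin> S" "c \<in> S" for a c using bd that by (auto simp: block_diag_def)
  define N where "N = (\<lambda>a c. if a \<in> S \<and> c \<in> S then B $ a $ c else 0)"
  define P where "P = (\<lambda>N::'n \<Rightarrow> 'n \<Rightarrow> real. (\<forall>a c. (a \<notin> S \<or> c \<notin> S) \<longrightarrow> N a c = 0) \<and>
     (\<forall>a\<in>S. \<forall>c\<in>S. (\<Sum>l\<in>S. H $ a $ l * N l c) = (if a = c then 1 else 0)))"
  have HBsum: "(\<Sum>l\<in>S. H $ a $ l * B $ l $ c) = (if a = c then 1 else 0)" if "a \<in> S" for a c
  proof -
    have "(\<Sum>l\<in>S. H $ a $ l * B $ l $ c) = (\<Sum>l\<in>UNIV. H $ a $ l * B $ l $ c)"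
      by (rule sum.mono_neutral_left) (auto simp: Hz that)
    also have "\<dots> = (H ** B) $ a $ c" by (simp add: matrix_matrix_mult_def)
    finally show ?thesis using HB by (simp add: mat_def)
  qed
  have BHsum: "(\<Sum>l\<in>S. B $ a $ l * H $ l $ c) = (if a = c then 1 else 0)" if "c \<in> S" for a c
  proof -
    have "(\<Sum>l\<in>S. B $ a $ l * H $ l $ c) = (\<Sum>l\<in>UNIV. B $ a $ l * H $ l $ c)"
      by (rule sum.mono_neutral_left) (auto simp: Hz2 that)
    also have "\<dots> = (B ** H) $ a $ c" by (simp add: matrix_matrix_mult_def)
    finally show ?thesis using BH by (simp add: mat_def)
  qed
  have PN: "P N" unfolding P_def
  proof (intro conjI ballI allI impI)
    fix a c assume "a \<notin> S \<or> c \<notin> S" thus "N a c = 0" by (auto simp: N_def)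
  next
    fix a c assume a: "a \<in> S" and c: "c \<in> S"
    have "(\<Sum>l\<in>S. H $ a $ l * N l c) = (\<Sum>l\<in>S. H $ a $ l * B $ l $ c)"
      by (rule sum.cong) (auto simp: N_def c)
    thus "(\<Sum>l\<in>S. H $ a $ l * N l c) = (if a = c then 1 else 0)" using HBsum[OF a] by simp
  qed
  have uniq: "N' = N" if PN': "P N'" for N'
  proof (rule ext, rule ext)
    fix a c
    show "N' a c = N a c"
    proof (cases "c \<in> S")
      case False thus ?thesis using PN PN' by (auto simp: P_def)
    next
      case c: True
      define w where "w = (\<chi> l. N' l c - N l c)"
      have wz: "w $ l = 0" if "l \<notin> S" for l using PN PN' that by (auto simp: P_def w_def)
      have "H *v w = 0"
      proof (rule vec_eq_iff[THEN iffD2], rule allI)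
        fix r
        have "(H *v w) $ r = (\<Sum>l\<in>UNIV. H $ r $ l * w $ l)" by (simp add: matrix_vector_mult_def)
        also have "\<dots> = (\<Sum>l\<in>S. H $ r $ l * w $ l)"
          by (rule sum.mono_neutral_right) (auto simp: wz)
        also have "\<dots> = 0"
        proof (cases "r \<in> S")
          case True
          have "(\<Sum>l\<in>S. H $ r $ l * w $ l) = (\<Sum>l\<in>S. H $ r $ l * N' l c) - (\<Sum>l\<in>S. H $ r $ l * N l c)"
            by (simp add: w_def algebra_simps sum_subtractf)
          thus ?thesis using PN PN' True c by (simp add: P_def)
        next
          case False thus ?thesis by (auto simp: Hz2 intro!: sum.neutral)
        qed
        finally show "(H *v w) $ r = 0 $ r" by simp
      qed
      hence "w = 0" using inj by blast
      hence "w $ a = 0" by simp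
      thus ?thesis by (simp add: w_def)
    qed
  qed
  have SI: "sub_inv H S = N"
    unfolding sub_inv_def using PN uniq unfolding P_def[symmetric] by (rule the_equality)
  have "sub_fmv N S (sub_mv H S g) i = (\<Sum>j\<in>S. N i j * (\<Sum>l\<in>S. H $ j $ l * g l))"
    by (simp add: sub_fmv_def sub_mv_def)
  also have "\<dots> = (\<Sum>j\<in>S. \<Sum>l\<in>S. B $ i $ j * H $ j $ l * g l)"
    by (rule sum.cong) (auto simp: N_def iS sum_distrib_left mult.assoc)
  also have "\<dots> = (\<Sum>l\<in>S. (\<Sum>j\<in>S. B $ i $ j * H $ j $ l) * g l)"
    by (subst sum.swap) (simp add: sum_distrib_right)
  also have "\<dots> = (\<Sum>l\<in>S. if i = l then g l else 0)"
    by (rule sum.cong) (auto simp: BHsum)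
  also have "\<dots> = g i" using iS by (simp add: sum.delta)
  finally show ?thesis using SI by simp
qed




locale vm =
  fixes A :: "real^'n^'m" and b :: "real^'m"
    and L lam mu :: real
    and x y :: "nat \<Rightarrow> real^'n"
    and Hm :: "nat \<Rightarrow> real^'n^'n"
    and alpha :: "nat \<Rightarrow> real"
    and xs :: "real^'n" and k0 :: nat
  assumes L_pos: "L > 0"
    and L_lip: "\<forall>u v. norm (lsq_grad A b u - lsq_grad A b v) \<le> L * norm (u - v)"
    and lam_pos: "lam > 0"
    and mu_pos: "mu > 0"
    and x_step: "\<forall>k. \<forall>z. lam * l0norm (x k)
                  + L/2 * (norm (x k - y k + (1/L) *\<^sub>R lsq_grad A b (y k)))^2
                  + mu/2 * (norm (x k - y k))^2
               \<le> lam * l0norm z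
                  + L/2 * (norm (z - y k + (1/L) *\<^sub>R lsq_grad A b (y k)))^2
                  + mu/2 * (norm (z - y k))^2"
    and H_spd: "\<forall>k. sym_posdef (Hm k)"
    and H_block: "\<forall>k. block_diag (Hm k) (- zero_idx (x k))"
    and alpha_def: "\<forall>k. let S = - zero_idx (x k);
                          g = (\<lambda>j. lsq_grad A b (x k) $ j);
                          d = (\<lambda>i. - sub_mv (Hm k) S g i);
                          Qd = sub_mv (transpose A ** A) S d
                      in alpha k = (if (\<forall>i\<in>S. Qd i = 0) then 0
                                    else - sub_dot S g d / sub_dot S d Qd)"
    and y_step: "\<forall>k. y (Suc k) = closest_point (coord_sub (zero_idx (x k)))
                         (x k - alpha k *\<^sub>R (Hm k *v lsq_grad A b (x k)))"
    and cluster: "\<exists>r. strict_mono r \<and> (x \<circ> r) \<longlonglongrightarrow> xs"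
    and k0_supp: "\<forall>k\<ge>k0. zero_idx (y k) = zero_idx (x k) \<and> zero_idx (x k) = zero_idx xs"
    and alpha_pos: "\<forall>k\<ge>k0. alpha k > 0"
begin

abbreviation "G \<equiv> transpose A ** A"
abbreviation "f \<equiv> lsq_f A b"
abbreviation "gr \<equiv> lsq_grad A b"

definition "S = - zero_idx xs"
definition "gk k = msk S (gr (x k))"
definition "Dk k = - (Hm k *v gk k)"
definition "cc = 1 / (L + mu)"

lemma xsC: "msk S xs = xs"
  by (auto simp: S_def zero_idx_def vec_eq_iff)

lemma xC: "k \<ge> k0 \<Longrightarrow> msk S (x k) = x k"
  using k0_supp by (auto simp: S_def zero_idx_def vec_eq_iff)

lemma yC: "k \<ge> k0 \<Longrightarrow> msk S (y k) = y k"
  using k0_supp by (auto simp: S_def zero_idx_def vec_eq_iff)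

lemma Sx: "k \<ge> k0 \<Longrightarrow> - zero_idx (x k) = S"
  using k0_supp by (auto simp: S_def)

lemma bdS: "k \<ge> k0 \<Longrightarrow> block_diag (Hm k) S"
  using H_block Sx by metis

lemma x_form: "k \<ge> k0 \<Longrightarrow> x k = y k - cc *\<^sub>R msk S (gr (y k))"
proof -
  assume k: "k \<ge> k0"
  have "x k = msk (- zero_idx (x k)) (y k - (1/(L+mu)) *\<^sub>R gr (y k))"
    using prox_char[OF L_pos mu_pos less_imp_le[OF lam_pos]] x_step by blast
  also have "\<dots> = y k - cc *\<^sub>R msk S (gr (y k))"
    using Sx[OF k] yC[OF k] by (simp add: msk_diff msk_scale cc_def)
  finally show ?thesis .
qed

lemma DC: "k \<ge> k0 \<Longrightarrow> msk S (Dk k) = Dk k"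
  using block_msk[OF bdS] by (simp add: Dk_def gk_def msk_minus)

lemma alpha_eq: assumes k: "k \<ge> k0"
  shows "alpha k = - (gk k \<bullet> Dk k) / (norm (A *v Dk k))^2 \<and> (norm (A *v Dk k))^2 > 0"
proof -
  define g where "g = (\<lambda>j. lsq_grad A b (x k) $ j)"
  define d where "d = (\<lambda>i. - sub_mv (Hm k) S g i)"
  define Qd where "Qd = sub_mv G S d"
  have a: "alpha k = (if (\<forall>i\<in>S. Qd i = 0) then 0 else - sub_dot S g d / sub_dot S d Qd)"
    using alpha_def[rule_format, of k] Sx[OF k] by (simp add: Let_def g_def d_def Qd_def)
  have dD: "d i = Dk k $ i" for i
  proof -
    have "(Hm k *v gk k) $ i = (\<Sum>j\<in>UNIV. Hm k $ i $ j * gk k $ j)"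
      by (simp add: matrix_vector_mult_def)
    also have "\<dots> = (\<Sum>j\<in>S. Hm k $ i $ j * gk k $ j)"
      by (rule sum.mono_neutral_right) (auto simp: gk_def)
    also have "\<dots> = sub_mv (Hm k) S g i"
      unfolding sub_mv_def g_def gk_def by (rule sum.cong) auto
    finally have "sub_mv (Hm k) S g i = (Hm k *v gk k) $ i" by simp
    thus ?thesis by (simp add: d_def Dk_def)
  qed
  have QdG: "Qd i = (G *v Dk k) $ i" for i
  proof -
    have "Qd i = (\<Sum>j\<in>S. G $ i $ j * Dk k $ j)" by (simp add: Qd_def sub_mv_def dD)
    also have "\<dots> = (\<Sum>j\<in>UNIV. G $ i $ j * Dk k $ j)"
      using DC[OF k] by (intro sum.mono_neutral_left) (auto, metis msk_nth)
    finally show ?thesis by (simp add: matrix_vector_mult_def)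
  qed
  have sd1: "sub_dot S g d = gk k \<bullet> Dk k"
    by (simp add: sub_dot_def gk_def inner_msk_sum g_def dD)
  have sd2: "sub_dot S d Qd = (norm (A *v Dk k))^2"
  proof -
    have "sub_dot S d Qd = msk S (Dk k) \<bullet> (G *v Dk k)"
      by (simp add: sub_dot_def inner_msk_sum dD QdG)
    thus ?thesis using DC[OF k] by (simp add: inner_G power2_norm_eq_inner)
  qed
  have ap: "alpha k > 0" using alpha_pos k by simp
  have nz: "\<not> (\<forall>i\<in>S. Qd i = 0)"
  proof
    assume "\<forall>i\<in>S. Qd i = 0" thus False using a ap by simp
  qed
  have a2: "alpha k = - (gk k \<bullet> Dk k) / (norm (A *v Dk k))^2" using nz a sd1 sd2 by (simp only: if_False)
  have "(norm (A *v Dk k))^2 \<noteq> 0" using ap a2 by auto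
  thus ?thesis using a2 by simp
qed

lemma y_form: assumes k: "k \<ge> k0" shows "y (Suc k) = x k + alpha k *\<^sub>R Dk k"
proof -
  have "y (Suc k) = msk S (x k - alpha k *\<^sub>R (Hm k *v gr (x k)))"
    using y_step[rule_format, of k] Sx[OF k] by (simp add: closest_coord)
  also have "\<dots> = x k - alpha k *\<^sub>R (Hm k *v gk k)"
    using xC[OF k] block_msk[OF bdS[OF k]] by (simp add: msk_diff msk_scale gk_def)
  finally show ?thesis by (simp add: Dk_def)
qed

lemma f_y_step: assumes k: "k \<ge> k0"
  shows "f (y (Suc k)) = f (x k) - (gk k \<bullet> Dk k)^2 / (2 * (norm (A *v Dk k))^2)"
proof -
  obtain a where ad: "alpha k = - (gk k \<bullet> Dk k) / a" and apos: "a > 0" and aa: "a = (norm (A *v Dk k))^2"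
    using alpha_eq[OF k] by blast
  have gD: "gr (x k) \<bullet> Dk k = gk k \<bullet> Dk k"
    using DC[OF k] inner_msk_sym[of S "gr (x k)" "Dk k"] by (simp add: gk_def)
  have "f (y (Suc k)) = f (x k) + gr (x k) \<bullet> (alpha k *\<^sub>R Dk k) + 1/2 * (norm (A *v (alpha k *\<^sub>R Dk k)))^2"
    by (simp add: y_form[OF k] f_expand)
  also have "\<dots> = f (x k) + alpha k * (gk k \<bullet> Dk k) + 1/2 * (alpha k)^2 * a"
    by (simp add: gD aa matrix_vector_mult_scaleR power_mult_distrib)
  also have "\<dots> = f (x k) - (gk k \<bullet> Dk k)^2 / (2 * a)"
    using apos by (simp add: ad field_simps power2_eq_square)
  finally show ?thesis by (simp add: aa)
qed

lemma f_x_step: assumes k: "k \<ge> k0"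
  shows "f (x k) \<le> f (y k) - cc/2 * (norm (msk S (gr (y k))))^2"
proof -
  define h where "h = msk S (gr (y k))"
  have ccp: "cc > 0" using L_pos mu_pos by (simp add: cc_def)
  have hh: "gr (y k) \<bullet> h = (norm h)^2"
    using inner_msk_sym[of S "gr (y k)" h] by (simp add: h_def power2_norm_eq_inner inner_commute)
  have "f (x k) = f (y k + (- cc) *\<^sub>R h)" by (simp add: x_form[OF k] h_def)
  also have "\<dots> = f (y k) + gr (y k) \<bullet> ((- cc) *\<^sub>R h) + 1/2 * (norm (A *v ((- cc) *\<^sub>R h)))^2"
    by (rule f_expand)
  also have "\<dots> = f (y k) - cc * (norm h)^2 + 1/2 * (norm (A *v ((- cc) *\<^sub>R h)))^2"
    by (simp only: inner_scaleR_right hh)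
  also have "\<dots> \<le> f (y k) - cc * (norm h)^2 + 1/2 * (L * (norm ((- cc) *\<^sub>R h))^2)"
    using A_bound[OF L_lip, of "(- cc) *\<^sub>R h"] by simp
  also have "\<dots> = f (y k) - cc * (norm h)^2 + 1/2 * L * cc^2 * (norm h)^2"
    by (simp add: power_mult_distrib)
  also have "\<dots> \<le> f (y k) - cc/2 * (norm h)^2"
  proof -
    have "L * cc \<le> 1" using L_pos mu_pos by (simp add: cc_def field_simps)
    hence "1/2 * L * cc^2 * (norm h)^2 \<le> cc/2 * (norm h)^2"
      using ccp by (simp add: power2_eq_square mult_left_mono mult_right_mono)
    thus ?thesis by simp
  qed
  finally show ?thesis by (simp add: h_def)
qed

end



context vm begin

lemma cc_pos: "cc > 0" using L_pos mu_pos by (simp add: cc_def)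

lemma f_nonneg: "f v \<ge> 0" by (simp add: lsq_f_def)

lemma fyx: "k \<ge> k0 \<Longrightarrow> f (y (Suc k)) \<le> f (x k)"
  using f_y_step[of k] alpha_eq[of k] by (simp add: divide_nonneg_pos)

lemma fxy: "k \<ge> k0 \<Longrightarrow> f (x k) \<le> f (y k)"
  using f_x_step[of k] cc_pos
  by (smt (verit) divide_nonneg_pos mult_nonneg_nonneg zero_le_power2)

lemma gk_bound: assumes k: "k \<ge> k0"
  shows "norm (gk k) \<le> (1 + L * cc) * norm (msk S (gr (y k)))"
proof -
  define h where "h = msk S (gr (y k))"
  have "gk k = h + msk S (G *v (x k - y k))"
    unfolding gk_def h_def using grad_diff[of A b "x k" "y k"]
    by (metis add_diff_cancel_left' diff_add_cancel msk_add)
  hence 1: "norm (gk k) \<le> norm h + norm (msk S (G *v (x k - y k)))" by (simp add: norm_triangle_ineq)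
  have 2: "norm (msk S (G *v (x k - y k))) \<le> L * norm (x k - y k)"
    using norm_msk_le G_bound[OF L_lip] order_trans by blast
  have 3: "x k - y k = - (cc *\<^sub>R h)" using x_form[OF k] by (simp add: h_def)
  have "norm (gk k) \<le> norm h + L * (cc * norm h)" using 1 2 3 cc_pos by simp
  thus ?thesis by (simp add: h_def algebra_simps)
qed

lemma grad_xs_zero: "msk S (gr xs) = 0"
proof -
  define X where "X = (\<lambda>j. f (y (j + k0)))"
  have dec: "decseq X" unfolding X_def
    by (rule decseq_SucI) (metis fxy fyx le_add2 order_trans add_Suc)
  have X0: "\<forall>i. 0 \<le> X i" using f_nonneg by (simp add: X_def)
  obtain l where Xl: "X \<longlonglongrightarrow> l" and "\<forall>i. l \<le> X i" by (rule decseq_convergent[OF dec X0])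
  have dX: "(\<lambda>j. X j - X (Suc j)) \<longlonglongrightarrow> 0"
    using tendsto_diff[OF Xl LIMSEQ_Suc[OF Xl]] by simp
  have hb: "norm (gk (j + k0)) \<le> (1 + L * cc) * sqrt (2 / cc * (X j - X (Suc j)))" for j
  proof -
    let ?k = "j + k0"
    have "cc/2 * (norm (msk S (gr (y ?k))))^2 \<le> f (y ?k) - f (x ?k)" using f_x_step[of ?k] by simp
    also have "\<dots> \<le> X j - X (Suc j)" using fyx[of ?k] by (simp add: X_def)
    finally have "(norm (msk S (gr (y ?k))))^2 \<le> 2 / cc * (X j - X (Suc j))"
      using cc_pos by (simp add: field_simps)
    hence "norm (msk S (gr (y ?k))) \<le> sqrt (2 / cc * (X j - X (Suc j)))"
      by (rule real_le_rsqrt)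
    hence "(1 + L * cc) * norm (msk S (gr (y ?k))) \<le> (1 + L * cc) * sqrt (2 / cc * (X j - X (Suc j)))"
      using L_pos cc_pos by (intro mult_left_mono) auto
    thus ?thesis using gk_bound[of ?k] by simp
  qed
  have "(\<lambda>j. (1 + L * cc) * sqrt (2 / cc * (X j - X (Suc j)))) \<longlonglongrightarrow> (1 + L * cc) * sqrt (2 / cc * 0)"
    by (intro tendsto_mult_left tendsto_real_sqrt dX)
  hence lim0: "(\<lambda>j. (1 + L * cc) * sqrt (2 / cc * (X j - X (Suc j)))) \<longlonglongrightarrow> 0" by simp
  have ev: "eventually (\<lambda>j. norm (gk (j + k0)) \<le> (1 + L * cc) * sqrt (2 / cc * (X j - X (Suc j)))) sequentially"
    using hb by (intro always_eventually allI)
  have "(\<lambda>j. gk (j + k0)) \<longlonglongrightarrow> 0" by (rule Lim_null_comparison[OF ev lim0])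
  hence g0: "gk \<longlonglongrightarrow> 0" by (rule LIMSEQ_offset)
  obtain r where r: "strict_mono r" and xr: "(x \<circ> r) \<longlonglongrightarrow> xs" using cluster by blast
  have g0r: "(\<lambda>j. gk (r j)) \<longlonglongrightarrow> 0" using LIMSEQ_subseq_LIMSEQ[OF g0 r] by (simp add: o_def)
  have "(\<lambda>j. x (r j) - xs) \<longlonglongrightarrow> 0" using xr by (simp add: o_def LIM_zero)
  hence "(\<lambda>j. norm (x (r j) - xs)) \<longlonglongrightarrow> 0" by (rule tendsto_norm_zero)
  hence lr: "(\<lambda>j. L * norm (x (r j) - xs)) \<longlonglongrightarrow> 0" using tendsto_mult_left[of _ 0 sequentially L] by simp
  have ev2: "eventually (\<lambda>j. norm (gk (r j) - msk S (gr xs)) \<le> L * norm (x (r j) - xs)) sequentially"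
  proof (intro always_eventually allI)
    fix j
    have "gk (r j) - msk S (gr xs) = msk S (G *v (x (r j) - xs))"
      unfolding gk_def using grad_diff[of A b "x (r j)" xs] by (metis msk_diff)
    thus "norm (gk (r j) - msk S (gr xs)) \<le> L * norm (x (r j) - xs)"
      using norm_msk_le G_bound[OF L_lip] order_trans by metis
  qed
  have d1: "(\<lambda>j. gk (r j) - msk S (gr xs)) \<longlonglongrightarrow> 0" by (rule Lim_null_comparison[OF ev2 lr])
  have d2: "(\<lambda>j. gk (r j) - msk S (gr xs)) \<longlonglongrightarrow> 0 - msk S (gr xs)"
    by (rule tendsto_diff[OF g0r tendsto_const])
  have "0 = 0 - msk S (gr xs)" using LIMSEQ_unique[OF d1 d2] .
  thus ?thesis by simp
qed

lemma f_E: assumes "msk S v = v" shows "f v = f xs + 1/2 * bnorm2 G (v - xs)"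
proof -
  have "f v = f (xs + (v - xs))" by simp
  also have "\<dots> = f xs + gr xs \<bullet> (v - xs) + 1/2 * (norm (A *v (v - xs)))^2" by (rule f_expand)
  also have "gr xs \<bullet> (v - xs) = 0"
  proof -
    have "v - xs = msk S (v - xs)" using assms xsC by (simp add: msk_diff)
    hence "gr xs \<bullet> (v - xs) = msk S (gr xs) \<bullet> (v - xs)" by (metis inner_msk_sym)
    thus ?thesis by (simp add: grad_xs_zero)
  qed
  finally show ?thesis by (simp add: bnorm2_eq)
qed

end



context vm begin

definition "E v = bnorm2 G (v - xs)"

lemma E_nonneg: "E v \<ge> 0" by (simp add: E_def bnorm2_eq)

lemma E_le: "E v \<le> L * (norm (v - xs))^2"
  using A_bound[OF L_lip] by (simp add: E_def bnorm2_eq)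

lemma fx_E: "k \<ge> k0 \<Longrightarrow> f (x k) = f xs + 1/2 * E (x k)"
  using f_E[OF xC] by (simp add: E_def)
lemma fy_E: "k \<ge> k0 \<Longrightarrow> f (y k) = f xs + 1/2 * E (y k)"
  using f_E[OF yC] by (simp add: E_def)

lemma Exy: "k \<ge> k0 \<Longrightarrow> E (x k) \<le> E (y k)"
  using fxy fx_E fy_E by fastforce
lemma Eyx: "k \<ge> k0 \<Longrightarrow> E (y (Suc k)) \<le> E (x k)"
proof -
  assume k: "k \<ge> k0"
  have "f (y (Suc k)) \<le> f (x k)" by (rule fyx[OF k])
  thus ?thesis using fx_E[OF k] fy_E[of "Suc k"] k by simp
qed

lemma Ex_mono: "k \<ge> k0 \<Longrightarrow> E (x (Suc k)) \<le> E (x k)"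
  using Exy[of "Suc k"] Eyx[of k] by simp
lemma Ey_mono: "k \<ge> k0 \<Longrightarrow> E (y (Suc k)) \<le> E (y k)"
  using Exy[of k] Eyx[of k] by simp

lemma Ex_mono2: assumes m: "k0 \<le> m" and mk: "m \<le> k" shows "E (x k) \<le> E (x m)"
  using mk
proof (induction k rule: dec_induct)
  case base thus ?case by simp
next
  case (step n) thus ?case using Ex_mono[of n] m by simp
qed

lemma Ex_lim: "(\<lambda>k. E (x k)) \<longlonglongrightarrow> 0"
proof (rule LIMSEQ_I)
  fix eps :: real assume eps: "eps > 0"
  obtain r where r: "strict_mono r" and xr: "(x \<circ> r) \<longlonglongrightarrow> xs" using cluster by blast
  have "(\<lambda>j. x (r j) - xs) \<longlonglongrightarrow> 0" using xr by (simp add: o_def LIM_zero)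
  hence "(\<lambda>j. norm (x (r j) - xs)) \<longlonglongrightarrow> 0" by (rule tendsto_norm_zero)
  hence "(\<lambda>j. L * (norm (x (r j) - xs))^2) \<longlonglongrightarrow> L * 0^2" by (intro tendsto_mult_left tendsto_power)
  hence "(\<lambda>j. L * (norm (x (r j) - xs))^2) \<longlonglongrightarrow> 0" by simp
  then obtain N where N: "\<forall>j\<ge>N. norm (L * (norm (x (r j) - xs))^2 - 0) < eps"
    using LIMSEQ_D eps by blast
  define j where "j = max N k0"
  have rj: "r j \<ge> k0" using seq_suble[OF r, of j] by (simp add: j_def)
  have "E (x (r j)) < eps" using N[rule_format, of j] E_le[of "x (r j)"] L_pos
    by (simp add: j_def)
  hence "\<forall>k\<ge>r j. norm (E (x k) - 0) < eps"
  proof (intro allI impI)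
    fix k assume "k \<ge> r j"
    hence "E (x k) \<le> E (x (r j))" by (rule Ex_mono2[OF rj])
    thus "norm (E (x k) - 0) < eps" using \<open>E (x (r j)) < eps\<close> E_nonneg[of "x k"] by simp
  qed
  thus "\<exists>no. \<forall>k\<ge>no. norm (E (x k) - 0) < eps" by blast
qed

lemma Ey_lim: "(\<lambda>k. E (y k)) \<longlonglongrightarrow> 0"
proof -
  have ev: "eventually (\<lambda>k. norm (E (y (Suc k))) \<le> E (x k)) sequentially"
    unfolding eventually_sequentially using Eyx E_nonneg by (intro exI[of _ k0]) auto
  have "(\<lambda>k. E (y (Suc k))) \<longlonglongrightarrow> 0" by (rule Lim_null_comparison[OF ev Ex_lim])
  thus ?thesis by (rule LIMSEQ_imp_Suc)
qed

lemma y_locmin: assumes k: "k \<ge> k0" and E0: "E (y k) = 0"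
  shows "local_minimizer (Hobj A b lam) (y k)"
proof -
  define z where "z = y k"
  have zC: "msk S z = z" using yC[OF k] by (simp add: z_def)
  have Az: "A *v (z - xs) = 0" using E0 by (simp add: E_def bnorm2_eq z_def)
  have grz: "gr z = gr xs"
    using grad_diff[of A b z xs] Az by (simp add: matrix_vector_mul_assoc[symmetric])
  have mg: "msk S (gr z) = 0" using grz grad_xs_zero by simp
  have Sz: "{i. z $ i \<noteq> 0} = S" using k0_supp k by (auto simp: S_def zero_idx_def z_def)
  define del where "del = lam / (norm (gr z) + 1)"
  have "norm (gr z) + 1 > 0" using norm_ge_zero[of "gr z"] by linarith
  hence delp: "del > 0" using lam_pos by (simp add: del_def)
  have dl: "norm (gr z) * del < lam"
  proof -
    have "norm (gr z) * del = lam * (norm (gr z) / (norm (gr z) + 1))" by (simp add: del_def)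
    also have "\<dots> < lam * 1"
    proof (intro mult_strict_left_mono)
      have "norm (gr z) + 1 > 0" using norm_ge_zero[of "gr z"] by linarith
      thus "norm (gr z) / (norm (gr z) + 1) < 1" by (simp only: divide_less_eq_1_pos)
    qed (use lam_pos in auto)
    finally show ?thesis by simp
  qed
  define e where "e = Min (insert del ((\<lambda>i. \<bar>z $ i\<bar>) ` S))"
  have fin: "finite (insert del ((\<lambda>i. \<bar>z $ i\<bar>) ` S))" by simp
  have zS: "z $ i \<noteq> 0" if "i \<in> S" for i using Sz that by blast
  have zS': "z $ i = 0" if "i \<notin> S" for i using Sz that by blast
  have allp: "\<forall>a\<in>insert del ((\<lambda>i. \<bar>z $ i\<bar>) ` S). 0 < a" using delp zS by auto
  have ep: "e > 0" unfolding e_def using allp by (simp only: Min_gr_iff[OF fin insert_not_empty])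
  have ed: "e \<le> del" unfolding e_def by (rule Min_le[OF fin]) simp
  have ez: "e \<le> \<bar>z $ i\<bar>" if "i \<in> S" for i unfolding e_def by (rule Min_le[OF fin]) (simp add: that)
  have "\<forall>w. dist w z < e \<longrightarrow> Hobj A b lam z \<le> Hobj A b lam w"
  proof (intro allI impI)
    fix w assume dw: "dist w z < e"
    have wnz: "w $ i \<noteq> 0" if "i \<in> S" for i
    proof
      assume "w $ i = 0"
      hence "\<bar>z $ i\<bar> \<le> norm (w - z)" using component_le_norm_cart[of "w - z" i] by simp
      thus False using dw ez[OF that] by (simp add: dist_norm)
    qed
    have sub: "S \<subseteq> {i. w $ i \<noteq> 0}" using wnz by auto
    have fexp: "f w = f z + gr z \<bullet> (w - z) + 1/2 * (norm (A *v (w - z)))^2"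
      using f_expand[of A b z "w - z"] by simp
    show "Hobj A b lam z \<le> Hobj A b lam w"
    proof (cases "{i. w $ i \<noteq> 0} = S")
      case True
      have "msk S (w - z) = w - z" unfolding vec_eq_iff
      proof
        fix i show "msk S (w - z) $ i = (w - z) $ i"
        proof (cases "i \<in> S")
          case False
          hence "w $ i = 0" using True by blast
          thus ?thesis using zS'[OF False] False by simp
        qed simp
      qed
      hence "gr z \<bullet> (w - z) = 0" using mg by (metis inner_msk_sym inner_zero_left)
      hence "f z \<le> f w" using fexp by simp
      moreover have "l0norm w = l0norm z" using True Sz by (simp add: l0norm_def)
      ultimately show ?thesis by (simp add: Hobj_def)
    next
      case False
      hence "S \<subset> {i. w $ i \<noteq> 0}" using sub by auto
      hence "card S < card {i. w $ i \<noteq> 0}" by (intro psubset_card_mono) simp_all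
      hence l0: "l0norm z + 1 \<le> l0norm w" using Sz by (simp add: l0norm_def)
      have "- (gr z \<bullet> (w - z)) \<le> norm (gr z) * norm (w - z)"
        using norm_cauchy_schwarz[of "gr z" "z - w"] by (simp add: inner_diff_right norm_minus_commute)
      also have "\<dots> \<le> norm (gr z) * del"
        using dw ed by (intro mult_left_mono) (auto simp: dist_norm)
      finally have "f z - lam < f w" using fexp dl zero_le_power2[of "norm (A *v (w - z))"] by linarith
      hence "f z + lam * l0norm z \<le> f w + lam * l0norm w"
      proof -
        have "lam * (l0norm z + 1) \<le> lam * l0norm w" using l0 lam_pos by (intro mult_left_mono) auto
        thus ?thesis using \<open>f z - lam < f w\<close> by (simp add: distrib_left)
      qed
      thus ?thesis by (simp add: Hobj_def)
    qed
  qed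
  thus ?thesis unfolding local_minimizer_def z_def using ep by blast
qed

end



lemma transpose_inner: fixes A :: "real^'n^'m" shows "u \<bullet> (transpose A *v w) = (A *v u) \<bullet> w"
  using dot_lmul_matrix[of u "transpose A" w] by simp

lemma msk_zero[simp]: "msk S 0 = 0" by (simp add: vec_eq_iff)

lemma msk_linear: "linear (msk S)"
  by (rule linearI) (simp_all add: msk_add msk_scale)

lemma PL_const:
  fixes A :: "real^'n^'m"
  shows "\<exists>eps>0. \<forall>v. msk S v = v \<longrightarrow> eps * norm (A *v v) \<le> norm (msk S ((transpose A ** A) *v v))"
proof -
  define R where "R = range (\<lambda>v. A *v msk S v)"
  have sub: "subspace R" unfolding subspace_def R_def
  proof (intro conjI ballI allI)
    show "0 \<in> range (\<lambda>v. A *v msk S v)" by (rule range_eqI[of _ _ 0]) simp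
  next
    fix a b assume "a \<in> range (\<lambda>v. A *v msk S v)" "b \<in> range (\<lambda>v. A *v msk S v)"
    then obtain u v where "a = A *v msk S u" "b = A *v msk S v" by blast
    thus "a + b \<in> range (\<lambda>v. A *v msk S v)"
      by (intro range_eqI[of _ _ "u + v"]) (simp add: msk_add matrix_vector_right_distrib)
  next
    fix c and a assume "a \<in> range (\<lambda>v. A *v msk S v)"
    then obtain u where "a = A *v msk S u" by blast
    thus "c *\<^sub>R a \<in> range (\<lambda>v. A *v msk S v)"
      by (intro range_eqI[of _ _ "c *\<^sub>R u"]) (simp add: msk_scale matrix_vector_mult_scaleR)
  qed
  have cl: "closed R" by (rule closed_subspace[OF sub])
  have lin: "linear (\<lambda>w. msk S (transpose A *v w))"
    using linear_compose[OF matrix_vector_mul_linear[of "transpose A"] msk_linear[of S]] by (simp add: o_def)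
  have bl: "bounded_linear (\<lambda>w. msk S (transpose A *v w))" using lin by (simp add: linear_conv_bounded_linear)
  have inj: "\<forall>w\<in>R. msk S (transpose A *v w) = 0 \<longrightarrow> w = 0"
  proof (intro ballI impI)
    fix w assume "w \<in> R" and z: "msk S (transpose A *v w) = 0"
    then obtain u where wu: "w = A *v msk S u" by (auto simp: R_def)
    have "w \<bullet> w = (A *v msk S u) \<bullet> w" using wu by simp
    also have "\<dots> = msk S u \<bullet> (transpose A *v w)" by (rule transpose_inner[symmetric])
    also have "\<dots> = u \<bullet> msk S (transpose A *v w)" by (rule inner_msk_sym)
    finally show "w = 0" using z by simp
  qed
  obtain eps where eps: "eps > 0" and h: "\<forall>w\<in>R. eps * norm w \<le> norm (msk S (transpose A *v w))"
    using injective_imp_isometric[OF cl sub bl inj] by blast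
  have "\<forall>v. msk S v = v \<longrightarrow> eps * norm (A *v v) \<le> norm (msk S ((transpose A ** A) *v v))"
  proof (intro allI impI)
    fix v assume v: "msk S v = v"
    have "A *v v \<in> R" unfolding R_def by (rule range_eqI[of _ _ v]) (simp add: v)
    thus "eps * norm (A *v v) \<le> norm (msk S ((transpose A ** A) *v v))"
      using h by (simp add: matrix_vector_mul_assoc[symmetric])
  qed
  thus ?thesis using eps by blast
qed

context vm begin

lemma E_step: assumes k: "k \<ge> k0"
  shows "E (x (Suc k)) \<le> E (x k) - (gk k \<bullet> Dk k)^2 / (norm (A *v Dk k))^2"
proof -
  have "E (x (Suc k)) \<le> E (y (Suc k))" using Exy[of "Suc k"] k by simp
  also have "\<dots> = 2 * (f (y (Suc k)) - f xs)" using fy_E[of "Suc k"] k by simp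
  also have "\<dots> = 2 * (f (x k) - f xs) - (gk k \<bullet> Dk k)^2 / (norm (A *v Dk k))^2"
    using f_y_step[OF k] by (simp add: field_simps)
  also have "\<dots> = E (x k) - (gk k \<bullet> Dk k)^2 / (norm (A *v Dk k))^2" using fx_E[OF k] by simp
  finally show ?thesis .
qed

lemma gk_G: assumes k: "k \<ge> k0" shows "gk k = msk S (G *v (x k - xs))"
proof -
  have "gk k = msk S (gr xs) + msk S (G *v (x k - xs))"
    unfolding gk_def using grad_diff[of A b "x k" xs] by (metis add_diff_cancel_left' diff_add_cancel msk_add)
  thus ?thesis using grad_xs_zero by simp
qed

lemma linear_rate:
  assumes m: "0 < m" "m \<le> M"
    and HmM: "\<forall>k v. m * (norm v)^2 \<le> v \<bullet> (Hm k *v v) \<and> v \<bullet> (Hm k *v v) \<le> M * (norm v)^2"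
  shows "\<exists>c. 0 \<le> c \<and> c < 1 \<and> (\<forall>k\<ge>k0. E (x (Suc k)) \<le> c * E (x k))"
proof -
  obtain eps where eps: "eps > 0"
    and pl: "\<forall>v. msk S v = v \<longrightarrow> eps * norm (A *v v) \<le> norm (msk S (G *v v))"
    using PL_const[of S A] by blast
  define kap where "kap = m^2 / (L * M^2)"
  have Mp: "M > 0" using m by simp
  have kp: "kap > 0" using m L_pos by (simp add: kap_def)
  define c where "c = max 0 (1 - kap * eps^2)"
  have c1: "c < 1" using kp eps by (simp add: c_def)
  have step: "E (x (Suc k)) \<le> c * E (x k)" if k: "k \<ge> k0" for k
  proof -
    define g where "g = gk k"
    define D where "D = Dk k"
    have e: "msk S (x k - xs) = x k - xs" using xC[OF k] xsC by (simp add: msk_diff)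
    have gE: "eps * norm (A *v (x k - xs)) \<le> norm g"
      using pl e gk_G[OF k] by (simp add: g_def)
    have Eg: "eps^2 * E (x k) \<le> (norm g)^2"
    proof -
      have "(eps * norm (A *v (x k - xs)))^2 \<le> (norm g)^2"
        using gE eps by (intro power_mono) auto
      thus ?thesis by (simp add: E_def bnorm2_eq power_mult_distrib)
    qed
    have gHg: "g \<bullet> D = - (g \<bullet> (Hm k *v g))" by (simp add: D_def Dk_def g_def)
    have mg: "m * (norm g)^2 \<le> g \<bullet> (Hm k *v g)" using HmM by blast
    have num: "(m * (norm g)^2)^2 \<le> (g \<bullet> D)^2"
      using mg m by (simp add: gHg) (intro power_mono, auto)
    have HD: "(norm D)^2 \<le> M^2 * (norm g)^2"
      using spd_norm_bound[of "Hm k" M g] H_spd HmM by (simp add: D_def Dk_def g_def)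
    have AD: "(norm (A *v D))^2 \<le> L * (M^2 * (norm g)^2)"
      using A_bound[OF L_lip, of D] HD L_pos by (meson mult_left_mono less_imp_le order_trans)
    have ADp: "(norm (A *v D))^2 > 0" using alpha_eq[OF k] by (simp add: D_def)
    have "kap * (norm g)^2 * (norm (A *v D))^2 \<le> kap * (norm g)^2 * (L * (M^2 * (norm g)^2))"
      using AD kp by (intro mult_left_mono) auto
    also have "\<dots> = (m * (norm g)^2)^2" using L_pos Mp by (simp add: kap_def field_simps power2_eq_square)
    also have "\<dots> \<le> (g \<bullet> D)^2" by (rule num)
    finally have "kap * (norm g)^2 \<le> (g \<bullet> D)^2 / (norm (A *v D))^2"
      using ADp by (simp add: pos_le_divide_eq)
    hence "E (x (Suc k)) \<le> E (x k) - kap * (norm g)^2"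
      using E_step[OF k] by (simp add: g_def D_def)
    also have "\<dots> \<le> E (x k) - kap * (eps^2 * E (x k))"
      using Eg kp by (simp add: mult_left_mono)
    also have "\<dots> = (1 - kap * eps^2) * E (x k)" by (simp add: algebra_simps)
    also have "\<dots> \<le> c * E (x k)" using E_nonneg[of "x k"] by (simp add: c_def mult_right_mono)
    finally show ?thesis .
  qed
  show ?thesis using c1 step by (intro exI[of _ c]) (simp add: c_def)
qed

end



lemma sub_norm_msk: "sub_norm S v = norm (msk S (\<chi> i. v i))"
proof -
  have "msk S (\<chi> i. v i) \<bullet> msk S (\<chi> i. v i) = (\<Sum>i\<in>S. (v i)^2)"
    by (simp add: inner_msk_sum power2_eq_square)
  thus ?thesis by (simp add: sub_norm_def norm_eq_sqrt_inner)
qed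

context vm begin

lemma A_iso:
  assumes pd: "\<forall>v. (\<exists>i\<in>S. v i \<noteq> 0) \<longrightarrow> sub_dot S v (sub_mv G S v) > 0"
  shows "\<exists>eps>0. \<forall>v. msk S v = v \<longrightarrow> eps * norm v \<le> norm (A *v v)"
proof -
  define C where "C = coord_sub (zero_idx xs)"
  have CS: "v \<in> C \<longleftrightarrow> msk S v = v" for v by (simp add: C_def coord_sub_msk S_def)
  have sub: "subspace C" by (simp add: C_def coord_sub_subspace)
  have cl: "closed C" by (rule closed_subspace[OF sub])
  have bl: "bounded_linear (\<lambda>v. A *v v)" by (simp add: linear_conv_bounded_linear)
  have inj: "\<forall>v\<in>C. A *v v = 0 \<longrightarrow> v = 0"
  proof (intro ballI impI, rule ccontr)
    fix v assume vC: "v \<in> C" and Av: "A *v v = 0" and nz: "v \<noteq> 0"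
    have vm: "msk S v = v" using vC CS by simp
    obtain i where "v $ i \<noteq> 0" using nz by (auto simp: vec_eq_iff)
    hence iS: "i \<in> S" using vm by (metis msk_nth)
    have "sub_dot S (\<lambda>i. v $ i) (sub_mv G S (\<lambda>i. v $ i)) > 0"
      using pd \<open>v $ i \<noteq> 0\<close> iS by blast
    moreover have "sub_dot S (\<lambda>i. v $ i) (sub_mv G S (\<lambda>i. v $ i)) = msk S v \<bullet> (G *v v)"
    proof -
      have "sub_mv G S (\<lambda>i. v $ i) j = (G *v v) $ j" for j
      proof -
        have "(G *v v) $ j = (\<Sum>l\<in>UNIV. G $ j $ l * v $ l)" by (simp add: matrix_vector_mult_def)
        also have "\<dots> = (\<Sum>l\<in>S. G $ j $ l * v $ l)"
          using vm by (intro sum.mono_neutral_right) (auto, metis msk_nth)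
        finally show ?thesis by (simp add: sub_mv_def)
      qed
      thus ?thesis by (simp add: sub_dot_def inner_msk_sum)
    qed
    moreover have "msk S v \<bullet> (G *v v) = 0" using vm Av by (simp add: inner_G)
    ultimately show False by simp
  qed
  obtain eps where "eps > 0" "\<forall>v\<in>C. eps * norm v \<le> norm (A *v v)"
    using injective_imp_isometric[OF cl sub bl inj] by blast
  thus ?thesis using CS by blast
qed

lemma superlinear:
  assumes pd: "\<forall>v. (\<exists>i\<in>- zero_idx xs. v i \<noteq> 0) \<longrightarrow>
                    sub_dot (- zero_idx xs) v (sub_mv (transpose A ** A) (- zero_idx xs) v) > 0"
    and DM: "(\<lambda>k. let S = - zero_idx xs;
                      d = (\<lambda>i. - sub_mv (Hm k) S (\<lambda>j. lsq_grad A b (x k) $ j) i)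
                  in sub_norm S (\<lambda>i. sub_fmv (sub_inv (Hm k) S) S d i
                                     - sub_mv (transpose A ** A) S d i) / sub_norm S d)
                \<longlonglongrightarrow> 0"
  shows "(\<lambda>k. norm (x (Suc k) - xs) / norm (x k - xs)) \<longlonglongrightarrow> 0"
proof -
  define t where "t = (\<lambda>k. let S = - zero_idx xs;
                      d = (\<lambda>i. - sub_mv (Hm k) S (\<lambda>j. lsq_grad A b (x k) $ j) i)
                  in sub_norm S (\<lambda>i. sub_fmv (sub_inv (Hm k) S) S d i
                                     - sub_mv (transpose A ** A) S d i) / sub_norm S d)"
  have t0: "t \<longlonglongrightarrow> 0" using DM by (simp add: t_def)
  obtain eps where eps: "eps > 0" and iso: "\<forall>v. msk S v = v \<longrightarrow> eps * norm v \<le> norm (A *v v)"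
    using A_iso pd unfolding S_def[symmetric] by blast
  define lm where "lm = eps^2"
  have lmp: "lm > 0" using eps by (simp add: lm_def)
  have quad: "lm * (norm v)^2 \<le> (norm (A *v v))^2" if "msk S v = v" for v
  proof -
    have "(eps * norm v)^2 \<le> (norm (A *v v))^2" using iso that eps by (intro power_mono) auto
    thus ?thesis by (simp add: lm_def power_mult_distrib)
  qed
  have Qiso: "lm * norm v \<le> norm (msk S (G *v v))" if v: "msk S v = v" for v
  proof -
    have "lm * (norm v)^2 \<le> v \<bullet> (G *v v)" using quad[OF v] by (simp add: inner_G power2_norm_eq_inner)
    also have "v \<bullet> (G *v v) = v \<bullet> msk S (G *v v)" using v inner_msk_sym by metis
    also have "\<dots> \<le> norm v * norm (msk S (G *v v))" by (rule norm_cauchy_schwarz)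
    finally have "lm * (norm v)^2 \<le> norm v * norm (msk S (G *v v))" .
    thus ?thesis by (cases "norm v = 0") (auto simp: power2_eq_square mult.assoc)
  qed
  have tk: "t k = norm (gk k + msk S (G *v Dk k)) / norm (Dk k)" if k: "k \<ge> k0" for k
  proof -
    define gf where "gf = (\<lambda>j. lsq_grad A b (x k) $ j)"
    define d where "d = (\<lambda>i. - sub_mv (Hm k) S gf i)"
    have dD: "d i = Dk k $ i" if "i \<in> S" for i
    proof -
      have "(Hm k *v gk k) $ i = (\<Sum>j\<in>UNIV. Hm k $ i $ j * gk k $ j)"
        by (simp add: matrix_vector_mult_def)
      also have "\<dots> = (\<Sum>j\<in>S. Hm k $ i $ j * gk k $ j)"
        by (rule sum.mono_neutral_right) (auto simp: gk_def)
      also have "\<dots> = sub_mv (Hm k) S gf i"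
        unfolding sub_mv_def gf_def gk_def by (rule sum.cong) auto
      finally show ?thesis by (simp add: d_def Dk_def)
    qed
    have DC': "Dk k $ i = 0" if "i \<notin> S" for i using DC[OF k] that by (metis msk_nth)
    have den: "sub_norm S d = norm (Dk k)"
    proof -
      have "msk S (\<chi> i. d i) = Dk k" using dD DC' by (auto simp: vec_eq_iff)
      thus ?thesis by (simp add: sub_norm_msk)
    qed
    have n1: "sub_fmv (sub_inv (Hm k) S) S d i = - gf i" if i: "i \<in> S" for i
    proof -
      have "sub_fmv (sub_inv (Hm k) S) S d i = - sub_fmv (sub_inv (Hm k) S) S (sub_mv (Hm k) S gf) i"
        by (simp add: sub_fmv_def d_def sum_negf)
      also have "\<dots> = - gf i" using sub_inv_apply[OF _ bdS[OF k] i] H_spd by simp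
      finally show ?thesis .
    qed
    have n2: "sub_mv G S d i = (G *v Dk k) $ i" for i
    proof -
      have "(G *v Dk k) $ i = (\<Sum>j\<in>UNIV. G $ i $ j * Dk k $ j)" by (simp add: matrix_vector_mult_def)
      also have "\<dots> = (\<Sum>j\<in>S. G $ i $ j * Dk k $ j)"
        by (rule sum.mono_neutral_right) (auto simp: DC')
      also have "\<dots> = sub_mv G S d i" unfolding sub_mv_def by (rule sum.cong) (auto simp: dD)
      finally show ?thesis by simp
    qed
    have num: "sub_norm S (\<lambda>i. sub_fmv (sub_inv (Hm k) S) S d i - sub_mv G S d i)
               = norm (gk k + msk S (G *v Dk k))"
    proof -
      have "msk S (\<chi> i. sub_fmv (sub_inv (Hm k) S) S d i - sub_mv G S d i) = - (gk k + msk S (G *v Dk k))"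
        using n1 n2 by (auto simp: vec_eq_iff gk_def gf_def)
      thus ?thesis unfolding sub_norm_msk by (simp only: norm_minus_cancel)
    qed
    show ?thesis unfolding t_def Let_def S_def[symmetric] using num den
      by (simp add: d_def gf_def)
  qed
  have bound: "norm (x (Suc k) - xs) / norm (x k - xs) \<le> 8 / lm * t k"
    if k: "k \<ge> k0" and tl: "t k \<le> lm / 2" for k
  proof -
    define e where "e = x k - xs"
    define D where "D = Dk k"
    define g where "g = gk k"
    define r where "r = g + msk S (G *v D)"
    have eC: "msk S e = e" using xC[OF k] xsC by (simp add: e_def msk_diff)
    have DC2: "msk S D = D" using DC[OF k] by (simp add: D_def)
    have ADp: "(norm (A *v D))^2 > 0" using alpha_eq[OF k] by (simp add: D_def)
    have Dnz: "norm D > 0" using ADp by (auto simp: D_def)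
    have tD: "norm r = t k * norm D" using tk[OF k] Dnz by (simp add: r_def g_def D_def)
    have t_nn: "t k \<ge> 0" using tD Dnz by (metis norm_ge_zero zero_le_divide_iff nonzero_mult_div_cancel_right less_irrefl)
    have "msk S (G *v (e + D)) = r"
      using gk_G[OF k] by (simp add: r_def g_def e_def matrix_vector_right_distrib msk_add)
    hence eD: "lm * norm (e + D) \<le> t k * norm D" using Qiso[of "e + D"] eC DC2 tD by (simp add: msk_add)
    have a_eq: "alpha k - 1 = - (D \<bullet> r) / (norm (A *v D))^2"
    proof -
      have "(norm (A *v D))^2 = D \<bullet> msk S (G *v D)"
        using DC2 inner_msk_sym[of S D "G *v D"] by (simp add: inner_G power2_norm_eq_inner)
      thus ?thesis using alpha_eq[OF k] ADp
        by (simp add: D_def g_def r_def inner_add_right field_simps inner_commute)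
    qed
    have a_b: "\<bar>alpha k - 1\<bar> \<le> t k / lm"
    proof -
      have "\<bar>D \<bullet> r\<bar> \<le> norm D * norm r" by (rule Cauchy_Schwarz_ineq2)
      also have "\<dots> = t k * (norm D)^2" using tD by (simp add: power2_eq_square)
      finally have 1: "\<bar>D \<bullet> r\<bar> \<le> t k * (norm D)^2" .
      have 2: "lm * (norm D)^2 \<le> (norm (A *v D))^2" by (rule quad[OF DC2])
      have "\<bar>alpha k - 1\<bar> = \<bar>D \<bullet> r\<bar> / (norm (A *v D))^2" using a_eq ADp by (simp add: abs_div)
      also have "\<dots> \<le> (t k * (norm D)^2) / (lm * (norm D)^2)"
        using 1 2 ADp lmp Dnz t_nn by (intro frac_le) auto
      also have "\<dots> = t k / lm" using Dnz by simp
      finally show ?thesis .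
    qed
    define ey where "ey = y (Suc k) - xs"
    have ey_eq: "ey = (e + D) + (alpha k - 1) *\<^sub>R D"
      using y_form[OF k] by (simp add: ey_def e_def D_def algebra_simps)
    have "norm ey \<le> norm (e + D) + \<bar>alpha k - 1\<bar> * norm D"
      using ey_eq norm_triangle_ineq[of "e + D" "(alpha k - 1) *\<^sub>R D"] by simp
    also have "\<dots> \<le> t k * norm D / lm + t k / lm * norm D"
    proof (rule add_mono)
      show "norm (e + D) \<le> t k * norm D / lm" using eD lmp by (simp add: field_simps)
      show "\<bar>alpha k - 1\<bar> * norm D \<le> t k / lm * norm D" using a_b norm_ge_zero by (rule mult_right_mono)
    qed
    finally have ey_b: "norm ey \<le> 2 * t k / lm * norm D" by (simp add: field_simps)
    have "norm D \<le> norm e + norm (e + D)"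
      using norm_triangle_ineq4[of "e + D" e] by (simp add: norm_minus_commute)
    also have "\<dots> \<le> norm e + norm D / 2"
    proof -
      have "norm (e + D) \<le> t k * norm D / lm" using eD lmp by (simp add: field_simps)
      also have "\<dots> \<le> (lm / 2) * norm D / lm" using tl lmp by (intro divide_right_mono mult_right_mono) auto
      also have "\<dots> = norm D / 2" using lmp by simp
      finally show ?thesis by simp
    qed
    finally have De: "norm D \<le> 2 * norm e" by simp
    have ySC: "msk S (y (Suc k)) = y (Suc k)" using yC[of "Suc k"] k by simp
    have xe: "x (Suc k) - xs = ey - cc *\<^sub>R msk S (G *v ey)"
    proof -
      have "msk S (gr (y (Suc k))) = msk S (gr xs) + msk S (G *v ey)"
        unfolding ey_def using grad_diff[of A b "y (Suc k)" xs] by (metis add_diff_cancel_left' diff_add_cancel msk_add)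
      thus ?thesis using x_form[of "Suc k"] k grad_xs_zero by (simp add: ey_def)
    qed
    have "norm (x (Suc k) - xs) \<le> norm ey + cc * norm (msk S (G *v ey))"
      using xe norm_triangle_ineq4[of ey "cc *\<^sub>R msk S (G *v ey)"] cc_pos by simp
    also have "\<dots> \<le> norm ey + cc * (L * norm ey)"
      using norm_msk_le G_bound[OF L_lip] cc_pos by (meson add_left_mono mult_left_mono order_trans less_imp_le)
    also have "\<dots> \<le> 2 * norm ey"
    proof -
      have "cc * L \<le> 1" using L_pos mu_pos by (simp add: cc_def field_simps)
      hence "cc * (L * norm ey) \<le> norm ey" by (metis mult.assoc mult_left_le_one_le norm_ge_zero mult_nonneg_nonneg cc_pos less_imp_le L_pos)
      thus ?thesis by simp
    qed
    also have "\<dots> \<le> 2 * (2 * t k / lm * norm D)" using ey_b by simp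
    also have "\<dots> \<le> 2 * (2 * t k / lm * (2 * norm e))"
      using De t_nn lmp by (intro mult_left_mono) auto
    also have "\<dots> = 8 / lm * t k * norm e" by (simp add: field_simps)
    finally have fin: "norm (x (Suc k) - xs) \<le> 8 / lm * t k * norm e" .
    show ?thesis
    proof (cases "norm e = 0")
      case True thus ?thesis using t_nn lmp by (simp add: e_def)
    next
      case False thus ?thesis using fin by (simp add: e_def pos_divide_le_eq)
    qed
  qed
  have ev1: "eventually (\<lambda>k. t k < lm / 2) sequentially"
    using t0 lmp by (intro order_tendstoD(2)) auto
  have ev: "eventually (\<lambda>k. norm (norm (x (Suc k) - xs) / norm (x k - xs)) \<le> 8 / lm * t k) sequentially"
    using ev1 eventually_ge_at_top[of k0]
  proof eventually_elim
    case (elim k) thus ?case using bound[of k] by simp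
  qed
  have "(\<lambda>k. 8 / lm * t k) \<longlonglongrightarrow> 8 / lm * 0" by (intro tendsto_mult_left t0)
  hence "(\<lambda>k. 8 / lm * t k) \<longlonglongrightarrow> 0" by simp
  thus ?thesis by (rule Lim_null_comparison[OF ev])
qed

end

theorem theorem2:
  fixes A :: "real^'n^'m" and b :: "real^'m"
    and L lam mu :: real
    and x y :: "nat \<Rightarrow> real^'n"
    and Hm :: "nat \<Rightarrow> real^'n^'n"
    and alpha :: "nat \<Rightarrow> real"
    and xs :: "real^'n" and k0 :: nat
  assumes L_pos: "L > 0"
    and L_lip: "\<forall>u v. norm (lsq_grad A b u - lsq_grad A b v) \<le> L * norm (u - v)"
    and lam_pos: "lam > 0"
    and mu_pos: "mu > 0"
    and x_step: "\<forall>k. \<forall>z. lam * l0norm (x k)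
                  + L/2 * (norm (x k - y k + (1/L) *\<^sub>R lsq_grad A b (y k)))^2
                  + mu/2 * (norm (x k - y k))^2
               \<le> lam * l0norm z
                  + L/2 * (norm (z - y k + (1/L) *\<^sub>R lsq_grad A b (y k)))^2
                  + mu/2 * (norm (z - y k))^2"
    and H_spd: "\<forall>k. sym_posdef (Hm k)"
    and H_block: "\<forall>k. block_diag (Hm k) (- zero_idx (x k))"
    and alpha_def: "\<forall>k. let S = - zero_idx (x k);
                          g = (\<lambda>j. lsq_grad A b (x k) $ j);
                          d = (\<lambda>i. - sub_mv (Hm k) S g i);
                          Qd = sub_mv (transpose A ** A) S d
                      in alpha k = (if (\<forall>i\<in>S. Qd i = 0) then 0
                                    else - sub_dot S g d / sub_dot S d Qd)"
    and y_step: "\<forall>k. y (Suc k) = closest_point (coord_sub (zero_idx (x k)))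
                         (x k - alpha k *\<^sub>R (Hm k *v lsq_grad A b (x k)))"
    and cluster: "\<exists>r. strict_mono r \<and> (x \<circ> r) \<longlonglongrightarrow> xs"
    and k0_supp: "\<forall>k\<ge>k0. zero_idx (y k) = zero_idx (x k) \<and> zero_idx (x k) = zero_idx xs"
    and alpha_pos: "\<forall>k\<ge>k0. alpha k > 0"
  shows "(\<forall>k\<ge>k0. bnorm2 (transpose A ** A) (x (Suc k) - xs) \<le> bnorm2 (transpose A ** A) (x k - xs))
       \<and> (\<forall>k\<ge>k0. bnorm2 (transpose A ** A) (y (Suc k) - xs) \<le> bnorm2 (transpose A ** A) (y k - xs))
       \<and> (\<lambda>k. bnorm2 (transpose A ** A) (x k - xs)) \<longlonglongrightarrow> 0
       \<and> (\<lambda>k. bnorm2 (transpose A ** A) (y k - xs)) \<longlonglongrightarrow> 0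
       \<and> (\<forall>k\<ge>k0. bnorm2 (transpose A ** A) (y k - xs) = 0 \<longrightarrow> local_minimizer (Hobj A b lam) (y k))
       \<and> ((\<exists>m M. 0 < m \<and> m \<le> M \<and> (\<forall>k v. m * (norm v)^2 \<le> v \<bullet> (Hm k *v v)
                                            \<and> v \<bullet> (Hm k *v v) \<le> M * (norm v)^2))
          \<longrightarrow> (\<exists>c. 0 \<le> c \<and> c < 1 \<and> (\<forall>k\<ge>k0. bnorm2 (transpose A ** A) (x (Suc k) - xs)
                                         \<le> c * bnorm2 (transpose A ** A) (x k - xs))))
       \<and> (((\<exists>m M. 0 < m \<and> m \<le> M \<and> (\<forall>k v. m * (norm v)^2 \<le> v \<bullet> (Hm k *v v)
                                            \<and> v \<bullet> (Hm k *v v) \<le> M * (norm v)^2))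
           \<and> (\<forall>v. (\<exists>i\<in>- zero_idx xs. v i \<noteq> 0) \<longrightarrow>
                    sub_dot (- zero_idx xs) v (sub_mv (transpose A ** A) (- zero_idx xs) v) > 0)
           \<and> (\<lambda>k. let S = - zero_idx xs;
                      d = (\<lambda>i. - sub_mv (Hm k) S (\<lambda>j. lsq_grad A b (x k) $ j) i)
                  in sub_norm S (\<lambda>i. sub_fmv (sub_inv (Hm k) S) S d i
                                     - sub_mv (transpose A ** A) S d i) / sub_norm S d)
                \<longlonglongrightarrow> 0)
          \<longrightarrow> (\<lambda>k. norm (x (Suc k) - xs) / norm (x k - xs)) \<longlonglongrightarrow> 0)"
proof -
  interpret vm A b L lam mu x y Hm alpha xs k0
    by (unfold_locales; (fact L_pos L_lip lam_pos mu_pos x_step H_spd H_block alpha_def y_step cluster k0_supp alpha_pos))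
  have p1: "\<forall>k\<ge>k0. bnorm2 (transpose A ** A) (x (Suc k) - xs) \<le> bnorm2 (transpose A ** A) (x k - xs)"
    using Ex_mono by (simp add: E_def)
  have p2: "\<forall>k\<ge>k0. bnorm2 (transpose A ** A) (y (Suc k) - xs) \<le> bnorm2 (transpose A ** A) (y k - xs)"
    using Ey_mono by (simp add: E_def)
  have p3: "(\<lambda>k. bnorm2 (transpose A ** A) (x k - xs)) \<longlonglongrightarrow> 0"
    using Ex_lim by (simp add: E_def)
  have p4: "(\<lambda>k. bnorm2 (transpose A ** A) (y k - xs)) \<longlonglongrightarrow> 0"
    using Ey_lim by (simp add: E_def)
  have p5: "\<forall>k\<ge>k0. bnorm2 (transpose A ** A) (y k - xs) = 0 \<longrightarrow> local_minimizer (Hobj A b lam) (y k)"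
    using y_locmin by (simp add: E_def)
  have p6: "(\<exists>m M. 0 < m \<and> m \<le> M \<and> (\<forall>k v. m * (norm v)^2 \<le> v \<bullet> (Hm k *v v)
                                            \<and> v \<bullet> (Hm k *v v) \<le> M * (norm v)^2))
          \<longrightarrow> (\<exists>c. 0 \<le> c \<and> c < 1 \<and> (\<forall>k\<ge>k0. bnorm2 (transpose A ** A) (x (Suc k) - xs)
                                         \<le> c * bnorm2 (transpose A ** A) (x k - xs)))"
    using linear_rate by (auto simp: E_def)
  have p7: "((\<exists>m M. 0 < m \<and> m \<le> M \<and> (\<forall>k v. m * (norm v)^2 \<le> v \<bullet> (Hm k *v v)
                                            \<and> v \<bullet> (Hm k *v v) \<le> M * (norm v)^2))
           \<and> (\<forall>v. (\<exists>i\<in>- zero_idx xs. v i \<noteq> 0) \<longrightarrow>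
                    sub_dot (- zero_idx xs) v (sub_mv (transpose A ** A) (- zero_idx xs) v) > 0)
           \<and> (\<lambda>k. let S = - zero_idx xs;
                      d = (\<lambda>i. - sub_mv (Hm k) S (\<lambda>j. lsq_grad A b (x k) $ j) i)
                  in sub_norm S (\<lambda>i. sub_fmv (sub_inv (Hm k) S) S d i
                                     - sub_mv (transpose A ** A) S d i) / sub_norm S d)
                \<longlonglongrightarrow> 0)
          \<longrightarrow> (\<lambda>k. norm (x (Suc k) - xs) / norm (x k - xs)) \<longlonglongrightarrow> 0"
  proof (intro impI)
    assume h: "(\<exists>m M. 0 < m \<and> m \<le> M \<and> (\<forall>k v. m * (norm v)^2 \<le> v \<bullet> (Hm k *v v)
                                            \<and> v \<bullet> (Hm k *v v) \<le> M * (norm v)^2))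
           \<and> (\<forall>v. (\<exists>i\<in>- zero_idx xs. v i \<noteq> 0) \<longrightarrow>
                    sub_dot (- zero_idx xs) v (sub_mv (transpose A ** A) (- zero_idx xs) v) > 0)
           \<and> (\<lambda>k. let S = - zero_idx xs;
                      d = (\<lambda>i. - sub_mv (Hm k) S (\<lambda>j. lsq_grad A b (x k) $ j) i)
                  in sub_norm S (\<lambda>i. sub_fmv (sub_inv (Hm k) S) S d i
                                     - sub_mv (transpose A ** A) S d i) / sub_norm S d)
                \<longlonglongrightarrow> 0"
    show "(\<lambda>k. norm (x (Suc k) - xs) / norm (x k - xs)) \<longlonglongrightarrow> 0"
      by (rule superlinear) (use h in blast)+
  qed
  show ?thesis using p1 p2 p3 p4 p5 p6 p7 by blast
qed

end
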